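(* Let $N\ge1$, $f:\mathbb{N}^N\to\mathbb{N}$, $p$ a prime and $n\ge1$. Let $U=\{\mathbf{x}\in\mathbb{N}^N:\mathbf{x}\ne\mathbf{0},\ x_i\in\{0,1\}\ \forall i\}$ and $h(\mathbf{s})=f(\mathbf{s})^p$ for $\mathbf{s}\in U$, $h(\mathbf{s})=0$ otherwise. Then $$\binom{pn}{p\mathbf{1}}_f\equiv\sum_{k=1}^{n}\ \sum_{\{\mathbf{b}_1,\dots,\mathbf{b}_k\}}\frac{(pn)!}{(p!)^k\,(p(n-k))!}\,f(\mathbf{0})^{p(n-k)}\,h(\mathbf{b}_1)\cdots h(\mathbf{b}_k)\pmod{pn},$$ where the inner sum runs over all vector partitions $\{\mathbf{b}_1,\dots,\mathbf{b}_k\}$ of $\mathbf{1}=(1,\dots,1)\in\mathbb{N}^N$ into $k$ non-zero parts (terms with $k>N$ are absent).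
   Context: $\mathbb{N}=\{0,1,2,\dots\}$. A vector partition of $\mathbf{1}$ into $k$ non-zero parts is a multiset of $k$ non-zero vectors in $\mathbb{N}^N$ summing to $\mathbf{1}$. For $k\ge0$ and $\mathbf{x}\in\mathbb{N}^N$, $\binom{k}{\mathbf{x}}_f=\sum_{\mathbf{m}_1+\cdots+\mathbf{m}_k=\mathbf{x}} f(\mathbf{m}_1)\cdots f(\mathbf{m}_k)$ over tuples of vectors in $\mathbb{N}^N$. Convention $0^0=1$. *)

theory Defs
  imports Main "HOL-Library.Multiset" "HOL-Library.FuncSet" "HOL-Number_Theory.Cong"
begin

text \<open>Vectors in N^N are represented as functions nat => nat vanishing at indices >= N.\<close>

definition vecs :: "nat \<Rightarrow> (nat \<Rightarrow> nat) set" where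
  "vecs N = {v. \<forall>i\<ge>N. v i = 0}"

definition zero_vec :: "nat \<Rightarrow> nat" where
  "zero_vec = (\<lambda>_. 0)"

definition const_vec :: "nat \<Rightarrow> nat \<Rightarrow> (nat \<Rightarrow> nat)" where
  "const_vec N c = (\<lambda>i. if i < N then c else 0)"

definition fbinom :: "nat \<Rightarrow> ((nat \<Rightarrow> nat) \<Rightarrow> nat) \<Rightarrow> nat \<Rightarrow> (nat \<Rightarrow> nat) \<Rightarrow> nat" where
  "fbinom N f k x =
     (\<Sum>m \<in> {m \<in> {..<k} \<rightarrow>\<^sub>E vecs N. (\<lambda>i. \<Sum>j<k. m j i) = x}. \<Prod>j<k. f (m j))"

definition vec_partitions :: "nat \<Rightarrow> nat \<Rightarrow> (nat \<Rightarrow> nat) multiset set" where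
  "vec_partitions N k =
     {B. size B = k \<and> (\<forall>b\<in>#B. b \<in> vecs N \<and> b \<noteq> zero_vec)
         \<and> (\<lambda>i. \<Sum>b\<in>#B. b i) = const_vec N 1}"

definition Uset :: "nat \<Rightarrow> (nat \<Rightarrow> nat) set" where
  "Uset N = {x \<in> vecs N. x \<noteq> zero_vec \<and> (\<forall>i<N. x i \<in> {0, 1})}"

definition hfun :: "nat \<Rightarrow> ((nat \<Rightarrow> nat) \<Rightarrow> nat) \<Rightarrow> nat \<Rightarrow> (nat \<Rightarrow> nat) \<Rightarrow> nat" where
  "hfun N f p s = (if s \<in> Uset N then f s ^ p else 0)"

end

theory Submission imports Defs "HOL-Combinatorics.Multiset_Permutations" begin

lemma sum_mset_mult: "(\<Sum>x\<in>#A. (g x::nat)) = (\<Sum>x\<in>set_mset A. count A x * g x)"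
proof (induction A)
  case empty then show ?case by simp
next
  case (add a A)
  show ?case
  proof (cases "a \<in># A")
    case True
    have "(\<Sum>x\<in>set_mset (add_mset a A). count (add_mset a A) x * g x)
        = (\<Sum>x\<in>set_mset A. count A x * g x + (if x = a then g x else 0))"
      using True by (intro sum.cong) (auto simp: insert_absorb)
    also have "\<dots> = (\<Sum>x\<in>set_mset A. count A x * g x) + g a"
      using True by (simp add: sum.distrib)
    finally show ?thesis using add by simp
  next
    case False
    have "(\<Sum>x\<in>set_mset A. count (add_mset a A) x * g x) = (\<Sum>x\<in>set_mset A. count A x * g x)"
      using False by (intro sum.cong) auto
    then show ?thesis using add False by (simp add: not_in_iff)
  qed
qed

lemma count_mul_le: "count A v * g v \<le> (\<Sum>x\<in>#A. (g x::nat))"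
proof (cases "v \<in># A")
  case True
  then show ?thesis unfolding sum_mset_mult
    by (intro member_le_sum[where f = "\<lambda>x. count A x * g x"]) auto
qed (simp add: not_in_iff)

lemma Gcd_dvd_lemma:
  assumes "finite X" shows "(\<forall>x\<in>X. (K::nat) dvd c x * M) \<Longrightarrow> K dvd Gcd (c ` X) * M"
  using assms
proof (induction X rule: finite_induct)
  case empty then show ?case by simp
next
  case (insert x X)
  have "Gcd (c ` insert x X) * M = gcd (c x * M) (Gcd (c ` X) * M)"
    by (simp add: gcd_mult_distrib_nat mult.commute)
  then show ?case using insert by simp
qed

lemma sum_mset_repeat: "(\<Sum>x\<in>#repeat_mset k B. (g x::nat)) = k * (\<Sum>x\<in>#B. g x)"
  by (induction k) (auto simp: algebra_simps)

lemma prod_mset_repeat: "(\<Prod>x\<in>#repeat_mset k B. (g x::nat)) = (\<Prod>x\<in>#B. g x) ^ k"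
  by (induction k) (auto simp: algebra_simps)

lemma prod_mset_power: "(\<Prod>x\<in>#B. (g x::nat) ^ k) = (\<Prod>x\<in>#B. g x) ^ k"
  by (induction B) (auto simp: power_mult_distrib)

lemma mem_le: assumes "v \<in># A" shows "v i \<le> (\<Sum>b\<in>#A. (b i::nat))"
proof -
  have "count A v \<ge> 1" using assms by (simp add: Suc_le_eq)
  then have "v i \<le> count A v * v i" by simp
  also have "\<dots> \<le> (\<Sum>b\<in>#A. b i)" by (rule count_mul_le)
  finally show ?thesis .
qed

lemma finite_V0: "finite {v \<in> vecs N. \<forall>i<N. v i \<le> p}"
proof -
  have inj: "inj_on (\<lambda>v. restrict v {..<N}) (vecs N)"
  proof (rule inj_onI)
    fix u v assume "u \<in> vecs N" "v \<in> vecs N" "restrict u {..<N} = restrict v {..<N}"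
    note uv = this
    show "u = v"
    proof
      fix i show "u i = v i"
      proof (cases "i < N")
        case True then show ?thesis using fun_cong[OF uv(3), of i] by simp
      next
        case False then show ?thesis using uv(1,2) by (simp add: vecs_def)
      qed
    qed
  qed
  have "(\<lambda>v. restrict v {..<N}) ` {v \<in> vecs N. \<forall>i<N. v i \<le> p} \<subseteq> {..<N} \<rightarrow>\<^sub>E {..p}"
  proof (rule image_subsetI)
    fix v assume "v \<in> {v \<in> vecs N. \<forall>i<N. v i \<le> p}"
    then show "restrict v {..<N} \<in> {..<N} \<rightarrow>\<^sub>E {..p}" by (simp add: restrict_PiE_iff)
  qed
  then have "finite ((\<lambda>v. restrict v {..<N}) ` {v \<in> vecs N. \<forall>i<N. v i \<le> p})"
    by (rule finite_subset) (simp add: finite_PiE)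
  then show ?thesis
    by (rule finite_imageD) (rule inj_on_subset[OF inj], auto)
qed

definition msum :: "(nat \<Rightarrow> nat) multiset \<Rightarrow> nat \<Rightarrow> nat" where
  "msum A = (\<lambda>i. \<Sum>b\<in>#A. b i)"

definition SS :: "nat \<Rightarrow> nat \<Rightarrow> (nat \<Rightarrow> nat) \<Rightarrow> (nat \<Rightarrow> nat) multiset set" where
  "SS N K x = {A. size A = K \<and> set_mset A \<subseteq> vecs N \<and> msum A = x}"

lemma msum_map_upt: "msum (mset (map m [0..<K])) = (\<lambda>i. \<Sum>j<K. m j i)"
proof
  fix i
  have "msum (mset (map m [0..<K])) i = sum_list (map (\<lambda>b. b i) (map m [0..<K]))"
    unfolding msum_def by (simp only: mset_map[symmetric] sum_mset_sum_list)
  also have "\<dots> = (\<Sum>j<K. m j i)"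
    by (simp add: sum_list_distinct_conv_sum_set atLeast0LessThan)
  finally show "msum (mset (map m [0..<K])) i = (\<Sum>j<K. m j i)" .
qed

lemma LHS_lists:
  "fbinom N f K x = (\<Sum>xs\<in>{xs. length xs = K \<and> set xs \<subseteq> vecs N \<and> msum (mset xs) = x}. prod_list (map f xs))"
  unfolding fbinom_def
proof (rule sum.reindex_bij_witness[where i = "\<lambda>xs k. if k < K then xs ! k else undefined"
      and j = "\<lambda>m. map m [0..<K]"])
  fix a assume a: "a \<in> {m \<in> {..<K} \<rightarrow>\<^sub>E vecs N. (\<lambda>i. \<Sum>j<K. m j i) = x}"
  then have aP: "a \<in> {..<K} \<rightarrow>\<^sub>E vecs N" and as: "(\<lambda>i. \<Sum>j<K. a j i) = x" by simp_all
  show "(\<lambda>k. if k < K then map a [0..<K] ! k else undefined) = a"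
  proof
    fix k show "(if k < K then map a [0..<K] ! k else undefined) = a k"
    proof (cases "k < K")
      case True then show ?thesis by simp
    next
      case False
      then have "a k = undefined" using PiE_arb[OF aP, of k] by simp
      then show ?thesis using False by simp
    qed
  qed
  have "set (map a [0..<K]) \<subseteq> vecs N"
  proof
    fix v assume "v \<in> set (map a [0..<K])"
    then obtain j where "j < K" "v = a j" by auto
    then show "v \<in> vecs N" using PiE_mem[OF aP, of j] by simp
  qed
  moreover have "msum (mset (map a [0..<K])) = x" using as by (simp only: msum_map_upt)
  ultimately show "map a [0..<K] \<in> {xs. length xs = K \<and> set xs \<subseteq> vecs N \<and> msum (mset xs) = x}"
    by simp
  show "prod_list (map f (map a [0..<K])) = (\<Prod>j<K. f (a j))"
    by (simp add: prod.distinct_set_conv_list[symmetric] atLeast0LessThan)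
next
  fix b assume b: "b \<in> {xs. length xs = K \<and> set xs \<subseteq> vecs N \<and> msum (mset xs) = x}"
  then have bl: "length b = K" and bs: "set b \<subseteq> vecs N" and bm: "msum (mset b) = x" by simp_all
  have eq: "map (\<lambda>k. if k < K then b ! k else undefined) [0..<K] = b"
    using bl by (intro nth_equalityI) auto
  show "map (\<lambda>k. if k < K then b ! k else undefined) [0..<K] = b" by (fact eq)
  have "(\<lambda>i. \<Sum>j<K. (if j < K then b ! j else undefined) i) = msum (mset b)"
    using msum_map_upt[of "\<lambda>k. if k < K then b ! k else undefined" K] eq by simp
  then have 1: "(\<lambda>i. \<Sum>j<K. (if j < K then b ! j else undefined) i) = x" using bm by simp
  have 2: "(\<lambda>k. if k < K then b ! k else undefined) \<in> {..<K} \<rightarrow>\<^sub>E vecs N"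
  proof (rule PiE_I)
    fix k assume "k \<in> {..<K}"
    then have "b ! k \<in> set b" using bl by simp
    then show "(if k < K then b ! k else undefined) \<in> vecs N" using bs \<open>k \<in> {..<K}\<close> by auto
  qed simp
  from 1 2 show "(\<lambda>k. if k < K then b ! k else undefined) \<in> {m \<in> {..<K} \<rightarrow>\<^sub>E vecs N. (\<lambda>i. \<Sum>j<K. m j i) = x}"
    by blast
qed

lemma LHS_msets:
  assumes x: "x = const_vec N p"
  shows "fbinom N f K x = (\<Sum>A\<in>SS N K x. card (permutations_of_multiset A) * (\<Prod>v\<in>#A. f v))"
proof -
  define LL where "LL = {xs. length xs = K \<and> set xs \<subseteq> vecs N \<and> msum (mset xs) = x}"
  have "LL \<subseteq> {xs. set xs \<subseteq> {v \<in> vecs N. \<forall>i<N. v i \<le> p} \<and> length xs = K}"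
  proof
    fix xs assume xs: "xs \<in> LL"
    then have l: "length xs = K" and s: "set xs \<subseteq> vecs N" and m: "msum (mset xs) = x"
      by (simp_all add: LL_def)
    have "set xs \<subseteq> {v \<in> vecs N. \<forall>i<N. v i \<le> p}"
    proof
      fix v assume v: "v \<in> set xs"
      have "\<forall>i<N. v i \<le> p"
      proof (intro allI impI)
        fix i assume i: "i < N"
        have "v i \<le> (\<Sum>b\<in>#mset xs. b i)" using v by (intro mem_le) simp
        also have "\<dots> = msum (mset xs) i" by (simp only: msum_def)
        also have "\<dots> = p" using m i by (simp add: x const_vec_def)
        finally show "v i \<le> p" .
      qed
      then show "v \<in> {v \<in> vecs N. \<forall>i<N. v i \<le> p}" using v s by auto
    qed
    then show "xs \<in> {xs. set xs \<subseteq> {v \<in> vecs N. \<forall>i<N. v i \<le> p} \<and> length xs = K}"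
      using l by simp
  qed
  then have fL: "finite LL"
    by (rule finite_subset) (intro finite_lists_length_eq finite_V0)
  have SSsub: "SS N K x \<subseteq> mset ` LL"
  proof
    fix A assume A: "A \<in> SS N K x"
    obtain xs where m: "mset xs = A" using ex_mset by blast
    have "xs \<in> LL" using A unfolding m[symmetric] SS_def LL_def by simp
    then show "A \<in> mset ` LL" using m by blast
  qed
  have fS: "finite (SS N K x)" by (rule finite_surj[OF fL SSsub])
  have img: "mset ` LL \<subseteq> SS N K x"
  proof (rule image_subsetI)
    fix xs assume "xs \<in> LL"
    then show "mset xs \<in> SS N K x" by (simp add: LL_def SS_def)
  qed
  have "fbinom N f K x = (\<Sum>xs\<in>LL. prod_list (map f xs))"
    unfolding LL_def by (rule LHS_lists)
  also have "\<dots> = (\<Sum>A\<in>SS N K x. \<Sum>xs\<in>{xs. xs \<in> LL \<and> mset xs = A}. prod_list (map f xs))"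
    by (rule sum.group[symmetric, OF fL fS img])
  also have "\<dots> = (\<Sum>A\<in>SS N K x. card (permutations_of_multiset A) * (\<Prod>v\<in>#A. f v))"
  proof (rule sum.cong[OF refl])
    fix A assume A: "A \<in> SS N K x"
    have "{xs. xs \<in> LL \<and> mset xs = A} = permutations_of_multiset A"
    proof (rule set_eqI)
      fix xs
      show "xs \<in> {xs. xs \<in> LL \<and> mset xs = A} \<longleftrightarrow> xs \<in> permutations_of_multiset A"
      proof
        assume "xs \<in> permutations_of_multiset A"
        then have m: "mset xs = A" by (simp add: permutations_of_multiset_def)
        have "length xs = K \<and> set xs \<subseteq> vecs N \<and> msum (mset xs) = x"
          using A unfolding m[symmetric] SS_def by simp
        then show "xs \<in> {xs. xs \<in> LL \<and> mset xs = A}" using m by (simp add: LL_def)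
      qed (simp add: permutations_of_multiset_def)
    qed
    note e1 = this
    have e2: "prod_list (map f xs) = (\<Prod>v\<in>#A. f v)" if "xs \<in> permutations_of_multiset A" for xs
    proof -
      have "mset xs = A" using that by (simp add: permutations_of_multiset_def)
      then have "(\<Prod>v\<in>#A. f v) = prod_mset (mset (map f xs))" by (simp only: mset_map)
      then show ?thesis by (simp only: prod_mset_prod_list)
    qed
    have "(\<Sum>xs\<in>{xs. xs \<in> LL \<and> mset xs = A}. prod_list (map f xs)) =
        (\<Sum>xs\<in>permutations_of_multiset A. (\<Prod>v\<in>#A. f v))"
      unfolding e1 by (rule sum.cong[OF refl]) (rule e2)
    also have "\<dots> = card (permutations_of_multiset A) * (\<Prod>v\<in>#A. f v)" by simp
    finally show "(\<Sum>xs\<in>{xs. xs \<in> LL \<and> mset xs = A}. prod_list (map f xs)) =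
        card (permutations_of_multiset A) * (\<Prod>v\<in>#A. f v)" .
  qed
  finally show ?thesis .
qed

lemma SS_sum: assumes "A \<in> SS N K x" shows "(\<Sum>b\<in>#A. b j) = x j"
proof -
  have "msum A = x" using assms by (simp add: SS_def)
  then have "msum A j = x j" by simp
  then show ?thesis by (simp add: msum_def)
qed

lemma VP_sum: assumes "B \<in> vec_partitions N k" shows "(\<Sum>b\<in>#B. b j) = const_vec N 1 j"
proof -
  have "(\<lambda>i. \<Sum>b\<in>#B. b i) = const_vec N 1" using assms by (simp add: vec_partitions_def)
  then show ?thesis by (rule fun_cong)
qed

lemma nonzero_vec: assumes "v \<in> vecs N" "v \<noteq> zero_vec" shows "\<exists>i<N. v i \<noteq> 0"
proof (rule ccontr)
  assume "\<not> (\<exists>i<N. v i \<noteq> 0)"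
  then have "v = zero_vec" using assms(1) by (auto simp: vecs_def zero_vec_def fun_eq_iff not_less)
  with assms(2) show False by simp
qed

lemma nonspecial_dvd:
  assumes p: "prime p" and N: "N \<ge> 1" and A: "A \<in> SS N (p*n) (const_vec N p)"
    and ns: "\<not> (\<forall>v. p dvd count A v)"
  shows "p*n dvd card (permutations_of_multiset A)"
proof -
  let ?M = "card (permutations_of_multiset A)"
  let ?G = "Gcd (count A ` set_mset A)"
  have 1: "\<forall>v\<in>set_mset A. p*n dvd count A v * ?M"
  proof
    fix v assume "v \<in> set_mset A"
    hence "?M * count A v = size A * card (permutations_of_multiset (A - {#v#}))"
      by (rule card_permutations_of_multiset_remove_aux)
    moreover have "size A = p*n" using A by (simp add: SS_def)
    ultimately show "p*n dvd count A v * ?M" by (metis dvd_triv_left mult.commute)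
  qed
  have 2: "p*n dvd ?G * ?M" by (rule Gcd_dvd_lemma[OF finite_set_mset 1])
  have s: "(\<Sum>x\<in>#A. x 0) = p" using SS_sum[OF A, of 0] N by (simp add: const_vec_def)
  have 3: "?G dvd p"
  proof -
    have "?G dvd (\<Sum>x\<in>set_mset A. count A x * x 0)"
      by (intro dvd_sum dvd_mult2 Gcd_dvd imageI)
    then show ?thesis using s sum_mset_mult[of "\<lambda>x. x 0" A] by simp
  qed
  have "?G = 1 \<or> ?G = p" using p 3 by (simp add: prime_nat_iff)
  moreover have "?G \<noteq> p"
  proof
    assume g: "?G = p"
    have "p dvd count A v" for v
    proof (cases "v \<in># A")
      case True then show ?thesis using g by (metis Gcd_dvd imageI)
    qed (simp add: not_in_iff)
    with ns show False by blast
  qed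
  ultimately show ?thesis using 2 by simp
qed

lemma special_count:
  assumes pp: "p > 0" and A: "A \<in> SS N K (const_vec N p)" and sp: "\<forall>v. p dvd count A v"
    and v: "v \<in># A" "v \<noteq> zero_vec"
  shows "count A v = p \<and> (\<forall>i<N. v i \<le> 1)"
proof -
  have vv: "v \<in> vecs N" using A v by (auto simp: SS_def)
  obtain i where i: "i < N" "v i \<noteq> 0" using nonzero_vec[OF vv v(2)] by blast
  have le: "count A v * v j \<le> p" if "j < N" for j
  proof -
    have "count A v * v j \<le> (\<Sum>x\<in>#A. x j)" by (rule count_mul_le)
    also have "\<dots> = p" using SS_sum[OF A, of j] that by (simp add: const_vec_def)
    finally show ?thesis .
  qed
  have cpos: "count A v \<ge> p" using sp v(1) by (simp add: dvd_imp_le)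
  have "count A v \<le> count A v * v i" using i(2) by simp
  also have "\<dots> \<le> p" using le[OF i(1)] .
  finally have c: "count A v = p" using cpos by simp
  have "v j \<le> 1" if "j < N" for j
  proof -
    have "p * v j \<le> p * 1" using le[OF that] c by simp
    then show ?thesis using pp by (simp only: mult_le_cancel1)
  qed
  with c show ?thesis by blast
qed

lemma VP_props:
  assumes B: "B \<in> vec_partitions N k" and b: "b \<in># B"
  shows "count B b = 1 \<and> b \<in> Uset N"
proof -
  have vv: "b \<in> vecs N" and nz: "b \<noteq> zero_vec" using B b by (auto simp: vec_partitions_def)
  obtain i where i: "i < N" "b i \<noteq> 0" using nonzero_vec[OF vv nz] by blast
  have le: "count B b * b j \<le> 1" if "j < N" for j
  proof -
    have "count B b * b j \<le> (\<Sum>x\<in>#B. x j)" by (rule count_mul_le)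
    also have "\<dots> = 1" using VP_sum[OF B, of j] that by (simp add: const_vec_def)
    finally show ?thesis .
  qed
  have cpos: "count B b \<ge> 1" using b by (simp add: Suc_le_eq)
  have "count B b \<le> count B b * b i" using i(2) by simp
  also have "\<dots> \<le> 1" using le[OF i(1)] .
  finally have "count B b \<le> 1" .
  then have c: "count B b = 1" using cpos by linarith
  have "b j \<le> 1" if "j < N" for j using le[OF that] c by simp
  then have "\<forall>j<N. b j \<in> {0, 1}"
  proof (intro allI impI)
    fix j assume "j < N"
    then have "b j \<le> 1" by fact
    then show "b j \<in> {0, 1}" by auto
  qed
  with c vv nz show ?thesis by (simp add: Uset_def)
qed

definition jm :: "nat \<Rightarrow> nat \<Rightarrow> nat \<Rightarrow> (nat \<Rightarrow> nat) multiset \<Rightarrow> (nat \<Rightarrow> nat) multiset" where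
  "jm p n k B = repeat_mset p B + replicate_mset (p * (n - k)) zero_vec"

definition im :: "(nat \<Rightarrow> nat) multiset \<Rightarrow> nat \<times> (nat \<Rightarrow> nat) multiset" where
  "im A = (size (mset_set (set_mset A - {zero_vec})), mset_set (set_mset A - {zero_vec}))"

lemma count_jm: "count (jm p n k B) v = p * count B v + (if v = zero_vec then p * (n - k) else 0)"
  by (simp add: jm_def)

lemma zero_in_vecs: "zero_vec \<in> vecs N" by (simp add: vecs_def zero_vec_def)

lemma msum_jm: "(\<Sum>b\<in>#jm p n k B. b i) = p * (\<Sum>b\<in>#B. b i)"
  by (simp add: jm_def sum_mset_repeat zero_vec_def)

lemma mem_jm:
  assumes pp: "p > 0"
  shows "x \<in># jm p n k B \<longleftrightarrow> x \<in># B \<or> (x = zero_vec \<and> k < n)"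
proof -
  have "x \<in># jm p n k B \<longleftrightarrow> 0 < count (jm p n k B) x" by simp
  also have "\<dots> \<longleftrightarrow> 0 < p * count B x + (if x = zero_vec then p * (n - k) else 0)"
    by (simp only: count_jm)
  also have "\<dots> \<longleftrightarrow> 0 < count B x \<or> (x = zero_vec \<and> k < n)"
    using pp by (cases "x = zero_vec") auto
  also have "\<dots> \<longleftrightarrow> x \<in># B \<or> (x = zero_vec \<and> k < n)" by simp
  finally show ?thesis .
qed

lemma jm_in:
  assumes pp: "p > 0" and k: "k \<in> {1..n}" and B: "B \<in> vec_partitions N k"
  shows "jm p n k B \<in> {A \<in> SS N (p*n) (const_vec N p). \<forall>v. p dvd count A v}"
proof -
  have "size (jm p n k B) = p * k + p * (n - k)" using B by (simp add: jm_def vec_partitions_def)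
  also have "\<dots> = p * n" using k by (simp flip: add_mult_distrib2)
  finally have sz: "size (jm p n k B) = p * n" .
  have st: "set_mset (jm p n k B) \<subseteq> vecs N"
  proof
    fix v assume "v \<in># jm p n k B"
    then have "v \<in># B \<or> v = zero_vec" using mem_jm[OF pp] by blast
    then show "v \<in> vecs N" using B zero_in_vecs by (auto simp: vec_partitions_def)
  qed
  have ms: "msum (jm p n k B) = const_vec N p"
  proof
    fix i show "msum (jm p n k B) i = const_vec N p i"
      unfolding msum_def using msum_jm[where p=p and n=n and k=k and B=B and i=i] VP_sum[OF B, of i] by (simp add: const_vec_def)
  qed
  have "p dvd count (jm p n k B) v" for v by (simp add: count_jm)
  with sz st ms show ?thesis by (simp add: SS_def)
qed

lemma mset_set_VP: assumes B: "B \<in> vec_partitions N k" shows "mset_set (set_mset B) = B"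
proof (rule multiset_eqI)
  fix x show "count (mset_set (set_mset B)) x = count B x"
    using VP_props[OF B, of x] by (cases "x \<in># B") (auto simp: not_in_iff)
qed

lemma im_jm:
  assumes pp: "p > 0" and B: "B \<in> vec_partitions N k"
  shows "im (jm p n k B) = (k, B)"
proof -
  have z: "zero_vec \<notin># B" using B by (auto simp: vec_partitions_def)
  have "set_mset (jm p n k B) - {zero_vec} = set_mset B"
  proof (intro set_eqI)
    fix x show "x \<in> set_mset (jm p n k B) - {zero_vec} \<longleftrightarrow> x \<in> set_mset B"
      using z mem_jm[OF pp, of x n k B] by auto
  qed
  then show ?thesis using mset_set_VP[OF B] B by (simp add: im_def vec_partitions_def)
qed

lemma decomp:
  assumes pp: "p > 0" and A: "A \<in> SS N K (const_vec N p)" and sp: "\<forall>v. p dvd count A v"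
  shows "A = repeat_mset p (snd (im A)) + replicate_mset (count A zero_vec) zero_vec"
proof (rule multiset_eqI)
  fix v
  show "count A v = count (repeat_mset p (snd (im A)) + replicate_mset (count A zero_vec) zero_vec) v"
  proof (cases "v = zero_vec")
    case True then show ?thesis by (simp add: im_def)
  next
    case False
    show ?thesis
    proof (cases "v \<in># A")
      case True
      then show ?thesis using special_count[OF pp A sp True False] False by (simp add: im_def)
    next
      case F2: False
      then show ?thesis using False by (simp add: im_def not_in_iff)
    qed
  qed
qed

lemma decomp2:
  assumes pp: "p > 0" and A: "A \<in> SS N (p*n) (const_vec N p)" and sp: "\<forall>v. p dvd count A v"
  shows "count A zero_vec = p * (n - fst (im A)) \<and> fst (im A) \<le> n"
proof -
  have "size A = p * size (snd (im A)) + count A zero_vec"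
    by (subst decomp[OF pp A sp]) simp
  moreover have "size A = p * n" using A by (simp add: SS_def)
  moreover have "fst (im A) = size (snd (im A))" by (simp add: im_def)
  ultimately have e: "p * n = p * fst (im A) + count A zero_vec" by simp
  then have "p * fst (im A) \<le> p * n" by linarith
  then have le: "fst (im A) \<le> n" using pp by simp
  have "count A zero_vec = p * n - p * fst (im A)" using e by simp
  also have "\<dots> = p * (n - fst (im A))" by (simp add: diff_mult_distrib2)
  finally show ?thesis using le by simp
qed

lemma jm_im:
  assumes pp: "p > 0" and A: "A \<in> SS N (p*n) (const_vec N p)" and sp: "\<forall>v. p dvd count A v"
  shows "jm p n (fst (im A)) (snd (im A)) = A"
  using decomp[OF pp A sp] decomp2[OF pp A sp] by (simp add: jm_def)

lemma im_in:
  assumes pp: "p > 0" and N: "N \<ge> 1" and A: "A \<in> SS N (p*n) (const_vec N p)" and sp: "\<forall>v. p dvd count A v"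
  shows "im A \<in> Sigma {1..n} (vec_partitions N)"
proof -
  define B where "B = snd (im A)"
  define k where "k = fst (im A)"
  have kB: "k = size B" by (simp add: k_def B_def im_def)
  have Aeq: "A = jm p n k B" using jm_im[OF pp A sp] by (simp add: k_def B_def)
  have kn: "k \<le> n" using decomp2[OF pp A sp] by (simp add: k_def)
  have sumB: "(\<Sum>b\<in>#B. b i) = const_vec N 1 i" for i
  proof -
    have "p * (\<Sum>b\<in>#B. b i) = (\<Sum>b\<in>#A. b i)" using msum_jm[where p=p and n=n and k=k and B=B and i=i] Aeq by simp
    also have "\<dots> = p * const_vec N 1 i" using SS_sum[OF A, of i] by (simp add: const_vec_def)
    finally show ?thesis using pp by simp
  qed
  have k1: "k \<ge> 1"
  proof (rule ccontr)
    assume "\<not> k \<ge> 1"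
    then have "size B = 0" using kB by linarith
    then have "B = {#}" by simp
    then have "(\<Sum>b\<in>#B. b 0) = 0" by simp
    with sumB[of 0] N show False by (simp add: const_vec_def)
  qed
  have Bel: "b \<in> vecs N \<and> b \<noteq> zero_vec" if "b \<in># B" for b
    using that A by (auto simp: B_def im_def SS_def)
  have VPB: "B \<in> vec_partitions N k"
    unfolding vec_partitions_def using kB Bel sumB by auto
  have "im A = (k, B)" by (simp add: k_def B_def)
  then show ?thesis using VPB k1 kn by simp
qed

lemma value_jm:
  assumes pp: "p > 0" and k: "k \<in> {1..n}" and B: "B \<in> vec_partitions N k"
  shows "card (permutations_of_multiset (jm p n k B)) * (\<Prod>v\<in>#jm p n k B. f v) =
     (fact (p*n) div (fact p ^ k * fact (p*(n-k)))) * f zero_vec ^ (p*(n-k)) * (\<Prod>b\<in>#B. hfun N f p b)"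
proof -
  let ?C = "jm p n k B"
  have z: "zero_vec \<notin># B" using B by (auto simp: vec_partitions_def)
  have szC: "size ?C = p*n" using jm_in[OF pp k B] by (simp add: SS_def)
  have cntB: "count ?C b = p" if "b \<in># B" for b
    using VP_props[OF B that] that z by (auto simp: count_jm)
  have cardB: "card (set_mset B) = k"
    using mset_set_VP[OF B] B by (metis (mono_tags, lifting) mem_Collect_eq size_mset_set vec_partitions_def)
  have prodB: "(\<Prod>x\<in>set_mset B. fact (count ?C x)) = (fact p ^ k :: nat)"
  proof -
    have "(\<Prod>x\<in>set_mset B. fact (count ?C x)) = (\<Prod>x\<in>set_mset B. (fact p :: nat))"
      using cntB by (intro prod.cong) auto
    then show ?thesis using cardB by simp
  qed
  have D: "(\<Prod>x\<in>set_mset ?C. fact (count ?C x)) = (fact p ^ k * fact (p*(n-k)) :: nat)"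
  proof (cases "k = n")
    case True
    have "set_mset ?C = set_mset B" using True mem_jm[OF pp, of _ n k B] by auto
    then show ?thesis using prodB True by simp
  next
    case False
    then have nk: "n - k > 0" using k by simp
    have "set_mset ?C = insert zero_vec (set_mset B)" using nk mem_jm[OF pp, of _ n k B] by auto
    moreover have "count ?C zero_vec = p * (n - k)" using z by (simp add: count_jm not_in_iff)
    ultimately show ?thesis using prodB z by (simp add: mult.commute)
  qed
  have card: "card (permutations_of_multiset ?C) = fact (p*n) div (fact p ^ k * fact (p*(n-k)))"
    using card_permutations_of_multiset(1)[of ?C] szC D by simp
  have F: "(\<Prod>v\<in>#?C. f v) = (\<Prod>b\<in>#B. f b) ^ p * f zero_vec ^ (p*(n-k))"
    by (simp add: jm_def prod_mset_repeat)
  have H: "(\<Prod>b\<in>#B. hfun N f p b) = (\<Prod>b\<in>#B. f b) ^ p"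
  proof -
    have "(\<Prod>b\<in>#B. hfun N f p b) = (\<Prod>b\<in>#B. f b ^ p)"
      using VP_props[OF B] by (intro arg_cong[where f=prod_mset] image_mset_cong) (simp add: hfun_def)
    then show ?thesis by (simp add: prod_mset_power)
  qed
  show ?thesis using card F H by (simp add: mult_ac)
qed

lemma finite_SS: "finite (SS N K (const_vec N p))"
proof -
  have "SS N K (const_vec N p) \<subseteq> mset ` {xs. set xs \<subseteq> {v \<in> vecs N. \<forall>i<N. v i \<le> p} \<and> length xs = K}"
  proof
    fix A assume A: "A \<in> SS N K (const_vec N p)"
    obtain xs where xs: "mset xs = A" using ex_mset by blast
    have "set xs \<subseteq> {v \<in> vecs N. \<forall>i<N. v i \<le> p}"
    proof (intro subsetI CollectI conjI allI impI)
      fix v assume v: "v \<in> set xs"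
      then show "v \<in> vecs N" using A xs by (auto simp: SS_def)
      fix i assume i: "i < N"
      have "v i \<le> (\<Sum>b\<in>#A. b i)" using v xs by (intro mem_le) auto
      also have "\<dots> = p" using SS_sum[OF A, of i] i by (simp add: const_vec_def)
      finally show "v i \<le> p" .
    qed
    moreover have "length xs = K" using A xs by (auto simp: SS_def)
    ultimately show "A \<in> mset ` {xs. set xs \<subseteq> {v \<in> vecs N. \<forall>i<N. v i \<le> p} \<and> length xs = K}"
      using xs by blast
  qed
  then show ?thesis
    by (rule finite_subset) (intro finite_imageI finite_lists_length_eq finite_V0)
qed

theorem theorem12:
  fixes N p n :: nat and f :: "(nat \<Rightarrow> nat) \<Rightarrow> nat"
  assumes "N \<ge> 1" and "prime p" and "n \<ge> 1"
  shows "[fbinom N f (p * n) (const_vec N p) =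
          (\<Sum>k = 1..n. \<Sum>B \<in> vec_partitions N k.
             (fact (p * n) div ((fact p) ^ k * fact (p * (n - k))))
             * f zero_vec ^ (p * (n - k)) * (\<Prod>b\<in>#B. hfun N f p b))] (mod (p * n))"
proof -
  have pp: "p > 0" using assms(2) by (simp add: prime_gt_0_nat)
  define x where "x = const_vec N p"
  define S where "S = SS N (p*n) x"
  define S1 where "S1 = {A \<in> S. \<forall>v. p dvd count A v}"
  define S2 where "S2 = {A \<in> S. \<not> (\<forall>v. p dvd count A v)}"
  define Sig where "Sig = Sigma {1..n} (vec_partitions N)"
  define g where "g = (\<lambda>A. card (permutations_of_multiset A) * (\<Prod>v\<in>#A. f v))"
  define h where "h = (\<lambda>k B. (fact (p * n) div ((fact p) ^ k * fact (p * (n - k))))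
             * f zero_vec ^ (p * (n - k)) * (\<Prod>b\<in>#B. hfun N f p b))"
  have fS: "finite S" unfolding S_def x_def by (rule finite_SS)
  have fS1: "finite S1" using fS unfolding S1_def by simp
  have fS2: "finite S2" using fS unfolding S2_def by simp
  have 1: "fbinom N f (p*n) x = sum g S" unfolding S_def g_def by (rule LHS_msets) (simp add: x_def)
  have "S = S1 \<union> S2" "S1 \<inter> S2 = {}" unfolding S1_def S2_def by blast+
  then have 2: "sum g S = sum g S1 + sum g S2" using fS1 fS2 by (simp add: sum.union_disjoint)
  have 3: "p*n dvd sum g S2"
    unfolding g_def
  proof (intro dvd_sum dvd_mult2)
    fix A assume "A \<in> S2"
    then show "p * n dvd card (permutations_of_multiset A)"
      using nonspecial_dvd[OF assms(2) assms(1)] by (auto simp: S2_def S_def x_def)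
  qed
  have S1_eq: "A \<in> S1 \<longleftrightarrow> A \<in> {A \<in> SS N (p*n) (const_vec N p). \<forall>v. p dvd count A v}" for A
    by (simp add: S1_def S_def x_def)
  have 4: "sum (\<lambda>(k, B). h k B) Sig = sum g S1"
  proof (rule sum.reindex_bij_witness[where i = im and j = "\<lambda>(k, B). jm p n k B"])
    fix a assume "a \<in> Sig"
    then obtain k B where a: "a = (k, B)" "k \<in> {1..n}" "B \<in> vec_partitions N k" by (auto simp: Sig_def)
    show "im (case a of (k, B) \<Rightarrow> jm p n k B) = a" using im_jm[OF pp a(3)] a by simp
    show "(case a of (k, B) \<Rightarrow> jm p n k B) \<in> S1" using jm_in[OF pp a(2,3)] a S1_eq by simp
    show "g (case a of (k, B) \<Rightarrow> jm p n k B) = (case a of (k, B) \<Rightarrow> h k B)"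
      using value_jm[OF pp a(2,3), of f] a by (simp add: g_def h_def)
  next
    fix b assume b: "b \<in> S1"
    then have b': "b \<in> SS N (p*n) (const_vec N p)" "\<forall>v. p dvd count b v" using S1_eq by blast+
    show "(case im b of (k, B) \<Rightarrow> jm p n k B) = b" using jm_im[OF pp b'] by (simp add: case_prod_beta)
    show "im b \<in> Sig" using im_in[OF pp assms(1) b'] by (simp add: Sig_def)
  qed
  have fSig: "finite Sig"
  proof (rule finite_subset[OF _ finite_imageI[OF fS1, of im]])
    show "Sig \<subseteq> im ` S1"
    proof
      fix a assume "a \<in> Sig"
      then obtain k B where a: "a = (k, B)" "k \<in> {1..n}" "B \<in> vec_partitions N k" by (auto simp: Sig_def)
      have "jm p n k B \<in> S1" using jm_in[OF pp a(2,3)] S1_eq by simp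
      moreover have "im (jm p n k B) = a" using im_jm[OF pp a(3)] a by simp
      ultimately show "a \<in> im ` S1" by force
    qed
  qed
  have fVP: "\<forall>k\<in>{1..n}. finite (vec_partitions N k)"
  proof
    fix k assume k: "k \<in> {1..n}"
    have "vec_partitions N k \<subseteq> snd ` Sig" using k by (force simp: Sig_def)
    then show "finite (vec_partitions N k)" using fSig by (meson finite_imageI finite_subset)
  qed
  have 5: "(\<Sum>k = 1..n. \<Sum>B \<in> vec_partitions N k. h k B) = sum (\<lambda>(k, B). h k B) Sig"
    unfolding Sig_def by (rule sum.Sigma[OF finite_atLeastAtMost fVP])
  obtain c where c: "sum g S2 = p * n * c" using 3 by blast
  have "fbinom N f (p*n) x = (\<Sum>k = 1..n. \<Sum>B \<in> vec_partitions N k. h k B) + p * n * c"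
    using 1 2 4 5 c by simp
  then have "[fbinom N f (p*n) x = (\<Sum>k = 1..n. \<Sum>B \<in> vec_partitions N k. h k B)] (mod (p*n))"
    by (simp add: cong_def)
  then show ?thesis by (simp add: x_def h_def)
qed

end
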